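(* The finite set $\widetilde{\mathcal{S}}$ admits a unique ordered partition $$\widetilde{\mathcal{S}}=\bigcup_{i=0}^{\ell'+1}\widetilde{\mathcal{S}}_i$$ into pairwise disjoint, possibly empty, subsets such that (i) for $0\le i_0<i\le\ell'+1$, elements $y_0\in\mathcal{S}^{\mathbf G}_{i_0}$ and $x\in\widetilde{\mathcal{S}}_i$ are either incomparable or satisfy $x\succ y_0$; (ii) for every $x_0\in\widetilde{\mathcal{S}}_{i_0}$ and every integer $i$ with $i_0\le i\le\ell'$, there exists $y\in\mathcal{S}^{\mathbf G}_i$ with $y\succ x_0$. Moreover, this partition satisfies (iii) for $0\le i_0<i\le\ell'+1$, elements $x_0\in\widetilde{\mathcal{S}}_{i_0}$ and $x\in\widetilde{\mathcal{S}}_i$ are either incomparable or satisfy $x\succ x_0$.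
   Context: Let $F$ be a number field with adèles $\mathbb{A}$, $D$ a central division algebra over $F$ of degree $d>1$, $G'_m$ the group of invertible elements of $M_m(D)$, $G_m=GL_m$ over $F$; parabolics are standard (block-upper-triangular), attached to ordered partitions; $\nu$ is the absolute value of reduced norm (resp. determinant). For the parabolic attached to $(n_1,\dots,n_r)$, third entries are $\underline z\in\mathbb{R}^r$ with $\sum n_jz_j=0$, $z_1\ge\dots\ge z_r$, $\nu_{\underline z}=\prod\nu(\ell_j)^{z_j}$; $\iota'$ (for $G'_n$) and $\iota$ (for $G_{nd}$) send $\underline z$ to $(z_1,\dots,z_1,\dots,z_r,\dots,z_r)$ with $z_j$ repeated $n_j$ times. Partial order on $\mathbb{R}^N$: $\underline s\succ\underline t$ iff $\underline s\ne\underline t$ and $\sum_{j\le i}s_j\le\sum_{j\le i}t_j$ for $i=1,\dots,N-1$; comparable means one is $\succ$ the other. Fix a cuspidal automorphic representation $\pi'$ of the Levi factor of a parabolic $P'$ of $G'_n$ and let $\sigma$ be the cuspidal representation of the Levi factor of a parabolic $Q$ of $G_{nd}$ given by the cuspidal support of its factorwise global Jacquet–Langlands transfer $\mathbf G(\pi')$ (Badulescu). $\mathcal{M}'$ (resp. $\mathcal{M}$) is the set of triples $(R',\Pi',\underline z')$ with $R'$ a parabolic of $G'_n$ containing an element associate to $P'$, $\Pi'$ a unitary discrete spectrum representation of its Levi factor, $\underline z'$ in the closed positive chamber, such that the cuspidal support of $\Pi'\otimes\nu_{\underline z'}$ is associate to $\pi'$ (resp. the same for $G_{nd}$, $Q$,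 $\sigma$). The map $\mathbf G:\mathcal{M}'\to\mathcal{M}$ sends $(R',\Pi'_1\otimes\cdots\otimes\Pi'_r,\underline z')$, $R'$ attached to $(n_1,\dots,n_r)$, to $(R,\mathbf G(\Pi'_1)\otimes\cdots\otimes\mathbf G(\Pi'_r),\underline z')$, $R$ attached to $(n_1d,\dots,n_rd)$. Let $\mathcal{S}'=\{\iota'(\underline z'):(R',\Pi',\underline z')\in\mathcal{M}'\}$ and $\mathcal{S}=\{\iota(\underline z):(R,\Pi,\underline z)\in\mathcal{M}\}$ (finite sets). Partition $\mathcal{S}'$: let $\mathcal{S}^{\rm aux}_0$ be the set of $\succ$-maximal elements of $\mathcal{S}'$ and inductively $\mathcal{S}^{\rm aux}_i$ the maximal elements of $\mathcal{S}'\setminus\bigcup_{j<i}\mathcal{S}^{\rm aux}_j$, until exhausted after $\ell'+1$ steps; $\mathcal{S}'_i=\mathcal{S}^{\rm aux}_{\ell'-i}$. Define $\mathcal{S}^{\mathbf G}_i=\{\iota(\mathbf G(\underline z')):\iota'(\underline z')\in\mathcal{S}'_i\}$ for $0\le i\le\ell'$, where $\iota(\mathbf G(\underline z'))$ is obtained from $\iota'(\underline z')$ by repeating each coordinate $d$ times, $\mathcal{S}^{\mathbf G}=\bigcup_i\mathcal{S}^{\mathbf G}_i$, and $\widetilde{\mathcal{S}}=\mathcal{S}\setminus\mathcal{S}^{\mathbf G}$. *)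

theory Defs
  imports Complex_Main
begin

text \<open>Vectors in R^N are represented as real lists of length N.
  The partial order: s \<succ> t iff s \<noteq> t and for i = 1..N-1 the i-th partial sum of s
  is at most the i-th partial sum of t.\<close>

definition succ :: "real list \<Rightarrow> real list \<Rightarrow> bool" where
  "succ s t \<longleftrightarrow> s \<noteq> t \<and>
     (\<forall>i\<in>{1..<length s}. sum_list (take i s) \<le> sum_list (take i t))"

definition comparable :: "real list \<Rightarrow> real list \<Rightarrow> bool" where
  "comparable s t \<longleftrightarrow> succ s t \<or> succ t s"

definition maxel :: "real list set \<Rightarrow> real list set" where
  "maxel A = {x \<in> A. \<not> (\<exists>y\<in>A. succ y x)}"

fun remS :: "real list set \<Rightarrow> nat \<Rightarrow> real list set" where
  "remS A 0 = A"
| "remS A (Suc k) = remS A k - maxel (remS A k)"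

definition auxS :: "real list set \<Rightarrow> nat \<Rightarrow> real list set" where
  "auxS A k = maxel (remS A k)"

definition ellp :: "real list set \<Rightarrow> nat" where
  "ellp A = (LEAST k. remS A (Suc k) = {})"

definition Sp :: "real list set \<Rightarrow> nat \<Rightarrow> real list set" where
  "Sp A i = auxS A (ellp A - i)"

text \<open>repeat each coordinate d times (\<iota>(G(z')) from \<iota>'(z'))\<close>
definition rep :: "nat \<Rightarrow> real list \<Rightarrow> real list" where
  "rep d v = concat (map (replicate d) v)"

definition SG :: "nat \<Rightarrow> real list set \<Rightarrow> nat \<Rightarrow> real list set" where
  "SG d A i = rep d ` Sp A i"

definition SGall :: "nat \<Rightarrow> real list set \<Rightarrow> real list set" where
  "SGall d A = (\<Union>i\<in>{0..ellp A}. SG d A i)"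

definition Stilde :: "nat \<Rightarrow> real list set \<Rightarrow> real list set \<Rightarrow> real list set" where
  "Stilde d A S = S - SGall d A"

text \<open>The defining properties of the ordered partition T_0,...,T_{\<ell>'+1} of S-tilde
  (T i = {} for i > \<ell>'+1 to make the indexing canonical).\<close>
definition good_partition ::
  "nat \<Rightarrow> real list set \<Rightarrow> real list set \<Rightarrow> (nat \<Rightarrow> real list set) \<Rightarrow> bool" where
  "good_partition d A S T \<longleftrightarrow>
     (\<forall>i>Suc (ellp A). T i = {}) \<and>
     (\<Union>i\<in>{0..Suc (ellp A)}. T i) = Stilde d A S \<and>
     (\<forall>i\<in>{0..Suc (ellp A)}. \<forall>j\<in>{0..Suc (ellp A)}. i \<noteq> j \<longrightarrow> T i \<inter> T j = {}) \<and>
     (\<forall>i0 i. i0 < i \<and> i \<le> Suc (ellp A) \<longrightarrow>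
        (\<forall>y0\<in>SG d A i0. \<forall>x\<in>T i. \<not> comparable x y0 \<or> succ x y0)) \<and>
     (\<forall>i0. \<forall>x0\<in>T i0. \<forall>i. i0 \<le> i \<and> i \<le> ellp A \<longrightarrow> (\<exists>y\<in>SG d A i. succ y x0))"

end

theory Submission imports Defs begin

lemma partial_eq:
  fixes s t :: "real list"
  assumes "length s = length t" "sum_list s = sum_list t"
    "\<forall>i\<in>{1..<length s}. sum_list (take i s) = sum_list (take i t)"
  shows "s = t"
proof -
  have P: "sum_list (take i s) = sum_list (take i t)" if "i \<le> length s" for i
    using assms that by (cases "i = 0"; cases "i = length s") auto
  show ?thesis
  proof (rule nth_equalityI)
    show "length s = length t" by fact
    fix k assume k: "k < length s"
    have "sum_list (take (Suc k) s) = sum_list (take k s) + s!k" using k by (simp add: take_Suc_conv_app_nth)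
    moreover have "sum_list (take (Suc k) t) = sum_list (take k t) + t!k" using k assms(1) by (simp add: take_Suc_conv_app_nth)
    moreover have "sum_list (take k s) = sum_list (take k t)" using P[of k] k by simp
    moreover have "sum_list (take (Suc k) s) = sum_list (take (Suc k) t)" using P[of "Suc k"] k by simp
    ultimately show "s!k = t!k" by linarith
  qed
qed

lemma succ_trans:
  assumes "length r = length s" "length s = length t" "sum_list r = sum_list s" "sum_list s = sum_list t"
    "succ r s" "succ s t"
  shows "succ r t"
proof -
  have le1: "\<forall>i\<in>{1..<length r}. sum_list (take i r) \<le> sum_list (take i s)"
    and le2: "\<forall>i\<in>{1..<length r}. sum_list (take i s) \<le> sum_list (take i t)"
    using assms unfolding succ_def by auto
  have "r \<noteq> t"
  proof
    assume "r = t"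
    then have "\<forall>i\<in>{1..<length r}. sum_list (take i r) = sum_list (take i s)"
      using le1 le2 by (metis order_antisym)
    then have "r = s" using partial_eq[of r s] assms by auto
    then show False using assms(5) unfolding succ_def by auto
  qed
  then show ?thesis unfolding succ_def using le1 le2 assms(1,2) by (metis order_trans)
qed

lemma succ_antisym:
  assumes "length s = length t" "sum_list s = sum_list t" "succ s t"
  shows "\<not> succ t s"
proof
  assume "succ t s"
  then have "\<forall>i\<in>{1..<length s}. sum_list (take i s) = sum_list (take i t)"
    using assms unfolding succ_def by (metis order_antisym)
  then have "s = t" using partial_eq[OF assms(1,2)] by auto
  then show False using assms(3) unfolding succ_def by auto
qed

lemma rep_append: "rep d (xs @ ys) = rep d xs @ rep d ys" by (simp add: rep_def)
lemma length_rep: "length (rep d v) = d * length v" by (induction v) (auto simp: rep_def)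
lemma sum_rep: "sum_list (rep d v) = real d * sum_list v"
  by (induction v) (auto simp: rep_def algebra_simps sum_list_replicate)

lemma take_rep0: "j \<le> length v \<Longrightarrow> take (d*j) (rep d v) = rep d (take j v)"
proof -
  assume j: "j \<le> length v"
  have "rep d v = rep d (take j v) @ rep d (drop j v)"
    by (metis append_take_drop_id rep_append)
  moreover have "length (rep d (take j v)) = d*j" using j by (simp add: length_rep min_def)
  ultimately show ?thesis by (metis append_eq_conv_conj)
qed

lemma take_rep: "j < length v \<Longrightarrow> r < d \<Longrightarrow>
   take (d*j + r) (rep d v) = rep d (take j v) @ replicate r (v!j)"
proof -
  assume j: "j < length v" and r: "r < d"
  have "rep d v = rep d (take j v) @ replicate d (v!j) @ rep d (drop (Suc j) v)"
    by (metis id_take_nth_drop[OF j] rep_append append_Cons append_Nil rep_def concat.simps(2) list.simps(9))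
  moreover have "length (rep d (take j v)) = d*j" using j by (simp add: length_rep min_def)
  ultimately show ?thesis using r by simp
qed

lemma psum_rep: "j < length v \<Longrightarrow> r < d \<Longrightarrow>
   sum_list (take (d*j + r) (rep d v)) = real d * sum_list (take j v)
     + real r * (sum_list (take (Suc j) v) - sum_list (take j v))"
  by (simp add: take_rep sum_rep take_Suc_conv_app_nth sum_list_replicate)

lemma rep_succ:
  assumes d: "d \<ge> 1" and "length s = length t" "sum_list s = sum_list t" "succ s t"
  shows "succ (rep d s) (rep d t)"
proof -
  have P: "sum_list (take j s) \<le> sum_list (take j t)" if "j \<le> length s" for j
    using assms that unfolding succ_def by (cases "j = 0"; cases "j = length s") auto
  have "rep d s \<noteq> rep d t"
  proof
    assume eq: "rep d s = rep d t"
    have "\<forall>i\<in>{1..<length s}. sum_list (take i s) = sum_list (take i t)"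
    proof
      fix i assume "i \<in> {1..<length s}"
      then have "sum_list (take (d*i) (rep d s)) = sum_list (take (d*i) (rep d t))" using eq by simp
      then have "real d * sum_list (take i s) = real d * sum_list (take i t)"
        using \<open>i \<in> _\<close> assms(2) by (simp add: take_rep0 sum_rep)
      then show "sum_list (take i s) = sum_list (take i t)" using d by simp
    qed
    then have "s = t" using partial_eq[OF assms(2,3)] by auto
    then show False using assms(4) unfolding succ_def by auto
  qed
  moreover have "\<forall>m\<in>{1..<length (rep d s)}. sum_list (take m (rep d s)) \<le> sum_list (take m (rep d t))"
  proof
    fix m assume m: "m \<in> {1..<length (rep d s)}"
    define j where "j = m div d"
    define r where "r = m mod d"
    have mj: "m = d*j + r" unfolding j_def r_def by simp
    have r: "r < d" unfolding r_def using d by simp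
    have j: "j < length s" using m d unfolding j_def by (simp add: length_rep less_mult_imp_div_less mult.commute)
    have e: "\<And>a b. real d * a + real r * (b - a) = (real d - real r) * a + real r * b"
      by (simp add: algebra_simps)
    have "sum_list (take m (rep d s)) = (real d - real r) * sum_list (take j s) + real r * sum_list (take (Suc j) s)"
      using psum_rep[OF j r] mj e by simp
    also have "\<dots> \<le> (real d - real r) * sum_list (take j t) + real r * sum_list (take (Suc j) t)"
      apply (rule add_mono)
       apply (rule mult_left_mono) using P[of j] j r apply auto[2]
      apply (rule mult_left_mono) using P[of "Suc j"] j apply auto
      done
    also have "\<dots> = sum_list (take m (rep d t))"
      using psum_rep[of j t r d] j r mj e assms(2) by simp
    finally show "sum_list (take m (rep d s)) \<le> sum_list (take m (rep d t))" .
  qed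
  ultimately show ?thesis unfolding succ_def by blast
qed

lemma remS_sub: "remS A k \<subseteq> A" by (induction k) auto
lemma auxS_sub: "auxS A k \<subseteq> A" unfolding auxS_def maxel_def using remS_sub by blast

lemma exists_max_above:
  assumes fin: "finite B" and B: "\<forall>v\<in>B. length v = n \<and> sum_list v = 0"
    and w0: "w0 \<in> B" "succ w0 z" and zl: "length z = n" "sum_list z = 0"
  shows "\<exists>w\<in>maxel B. succ w z"
proof -
  let ?r = "{(a,b). a \<in> B \<and> b \<in> B \<and> succ a b}"
  have fr: "finite ?r" by (rule finite_subset[of _ "B \<times> B"]) (use fin in auto)
  have tr: "trans ?r" unfolding trans_def
  proof (intro allI impI)
    fix a b c assume "(a,b) \<in> ?r" "(b,c) \<in> ?r"
    then show "(a,c) \<in> ?r" using B succ_trans[of a b c] by auto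
  qed
  have "acyclic ?r" unfolding acyclic_def trancl_id[OF tr] by (auto simp: succ_def)
  then have "wf ?r" using finite_acyclic_wf fr by blast
  then obtain w where w: "w \<in> {w\<in>B. succ w z}" and wm: "\<forall>y. (y, w) \<in> ?r \<longrightarrow> y \<notin> {w\<in>B. succ w z}"
    using w0 unfolding wf_eq_minimal by blast
  have "w \<in> maxel B"
    unfolding maxel_def
  proof (safe)
    show "w \<in> B" using w by blast
    fix y assume y: "y \<in> B" "succ y w"
    then have "succ y z" using succ_trans[of y w z] B w zl by auto
    then show False using wm y w by blast
  qed
  then show ?thesis using w by blast
qed

lemma aux_step:
  assumes fin: "finite A" and A: "\<forall>v\<in>A. length v = n \<and> sum_list v = 0"
    and z: "z \<in> auxS A (Suc k)"
  shows "\<exists>w\<in>auxS A k. succ w z"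
proof -
  have "z \<in> remS A (Suc k)" using z unfolding auxS_def maxel_def by auto
  then have z1: "z \<in> remS A k" "z \<notin> maxel (remS A k)" by auto
  then obtain y where "y \<in> remS A k" "succ y z" by (auto simp: maxel_def)
  moreover have "finite (remS A k)" using fin remS_sub finite_subset by blast
  moreover have "\<forall>v\<in>remS A k. length v = n \<and> sum_list v = 0" using A remS_sub by blast
  ultimately show ?thesis using exists_max_above[of "remS A k" n y z] z1 unfolding auxS_def by blast
qed

lemma aux_chain:
  assumes fin: "finite A" and A: "\<forall>v\<in>A. length v = n \<and> sum_list v = 0"
  shows "\<forall>z\<in>auxS A (k + Suc m). \<exists>w\<in>auxS A k. succ w z"
proof (induction m)
  case 0
  then show ?case using aux_step[OF fin A] by simp
next
  case (Suc m)
  show ?case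
  proof
    fix z assume "z \<in> auxS A (k + Suc (Suc m))"
    then have "z \<in> auxS A (Suc (k + Suc m))" by simp
    then obtain w1 where w1: "w1 \<in> auxS A (k + Suc m)" "succ w1 z" using aux_step[OF fin A] by blast
    then obtain w where w: "w \<in> auxS A k" "succ w w1" using Suc by blast
    have "z \<in> A" "w1 \<in> A" "w \<in> A" using w w1 \<open>z \<in> auxS A (Suc _)\<close> auxS_sub by blast+
    then have "succ w z" using succ_trans[of w w1 z] A w w1 by auto
    then show "\<exists>w\<in>auxS A k. succ w z" using w by blast
  qed
qed

theorem proposition4p7:
  fixes n d :: nat and Sp' S :: "real list set"
  assumes "d > 1" and "n \<ge> 1"
    and "finite Sp'" and "Sp' \<noteq> {}" and "finite S"
    and "\<forall>v\<in>Sp'. length v = n \<and> sorted_wrt (\<ge>) v \<and> sum_list v = 0"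
    and "\<forall>v\<in>S. length v = n * d \<and> sorted_wrt (\<ge>) v \<and> sum_list v = 0"
  shows "(\<exists>!T. good_partition d Sp' S T) \<and>
         (\<forall>T. good_partition d Sp' S T \<longrightarrow>
            (\<forall>i0 i. i0 < i \<and> i \<le> Suc (ellp Sp') \<longrightarrow>
               (\<forall>x0\<in>T i0. \<forall>x\<in>T i. \<not> comparable x x0 \<or> succ x x0)))"
proof -
  define L where "L = ellp Sp'"
  have d1: "d \<ge> 1" using assms(1) by simp
  have Ap: "\<forall>v\<in>Sp'. length v = n \<and> sum_list v = 0" using assms(6) by blast
  have SGp: "length y = n*d \<and> sum_list y = 0" if yi: "y \<in> SG d Sp' i" for y i
  proof -
    obtain z where z: "z \<in> auxS Sp' (ellp Sp' - i)" "y = rep d z"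
      using yi unfolding SG_def Sp_def by blast
    then have "z \<in> Sp'" using auxS_sub by blast
    then show ?thesis using z Ap by (simp add: length_rep sum_rep mult.commute)
  qed
  have Stp: "length x = n*d \<and> sum_list x = 0" if "x \<in> Stilde d Sp' S" for x
    using that assms(7) unfolding Stilde_def by blast
  define R where "R x = {i. i \<le> L \<and> (\<exists>y\<in>SG d Sp' i. succ y x)}" for x
  have up: "i' \<in> R x" if hh: "i \<in> R x" "i < i'" "i' \<le> L" "length x = n*d" "sum_list x = 0" for i i' x
  proof -
    obtain y where y: "y \<in> SG d Sp' i" "succ y x" using hh(1) unfolding R_def by blast
    obtain z where z: "z \<in> auxS Sp' (L - i)" "y = rep d z"
      using y unfolding SG_def Sp_def L_def by blast
    have "L - i = (L - i') + Suc (i' - i - 1)" using hh by simp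
    then obtain w where w: "w \<in> auxS Sp' (L - i')" "succ w z"
      using aux_chain[OF assms(3) Ap, of "L - i'" "i' - i - 1"] z by auto
    have "w \<in> Sp'" "z \<in> Sp'" using w z auxS_sub by blast+
    then have "succ (rep d w) y" using rep_succ[OF d1, of w z] w z Ap by auto
    moreover have "rep d w \<in> SG d Sp' i'" using w unfolding SG_def Sp_def L_def by blast
    ultimately have "succ (rep d w) x" using succ_trans[of "rep d w" y x] SGp y hh by auto
    then show ?thesis using \<open>rep d w \<in> SG d Sp' i'\<close> hh unfolding R_def by blast
  qed
  define g where "g x = (if R x = {} then Suc L else Min (R x))" for x
  have finR: "finite (R x)" for x by (rule finite_subset[of _ "{..L}"]) (auto simp: R_def)
  have Rint: "R x = {g x..L}" if "length x = n*d" "sum_list x = 0" for x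
  proof (cases "R x = {}")
    case True then show ?thesis by (simp add: g_def)
  next
    case False
    have mem: "Min (R x) \<in> R x" using False finR Min_in by blast
    show ?thesis
    proof
      show "R x \<subseteq> {g x..L}"
      proof
        fix j assume j: "j \<in> R x"
        then have "Min (R x) \<le> j" using finR Min_le by blast
        moreover have "j \<le> L" using j by (simp add: R_def)
        ultimately show "j \<in> {g x..L}" using False by (simp add: g_def)
      qed
      show "{g x..L} \<subseteq> R x"
      proof
        fix j assume "j \<in> {g x..L}"
        then have "Min (R x) \<le> j" "j \<le> L" using False by (auto simp: g_def)
        then show "j \<in> R x" using mem up[of "Min (R x)" x j] that
          by (cases "Min (R x) = j") auto
      qed
    qed
  qed
  have gle: "g x \<le> Suc L" for x
  proof (cases "R x = {}")
    case False
    then have "Min (R x) \<in> R x" using finR Min_in by blast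
    then show ?thesis using False by (auto simp: g_def R_def)
  qed (simp add: g_def)
  have gdet: "g x = i" if "R x = {i..L}" "i \<le> Suc L" for x i
  proof (cases "i = Suc L")
    case True then show ?thesis using that by (simp add: g_def)
  next
    case False
    then have "i \<le> L" using that by auto
    then have "R x \<noteq> {}" "Min (R x) = i" using that by (auto intro!: Min_eqI)
    then show ?thesis by (simp add: g_def)
  qed
  define T0 where "T0 i = {x \<in> Stilde d Sp' S. g x = i}" for i
  have T0good: "good_partition d Sp' S T0"
    unfolding good_partition_def L_def[symmetric]
  proof (intro conjI)
    show "\<forall>i>Suc L. T0 i = {}" using gle by (auto simp: T0_def) (metis leD)
    show "(\<Union>i\<in>{0..Suc L}. T0 i) = Stilde d Sp' S" using gle by (auto simp: T0_def)
    show "\<forall>i\<in>{0..Suc L}. \<forall>j\<in>{0..Suc L}. i \<noteq> j \<longrightarrow> T0 i \<inter> T0 j = {}" by (auto simp: T0_def)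
    show "\<forall>i0 i. i0 < i \<and> i \<le> Suc L \<longrightarrow>
        (\<forall>y0\<in>SG d Sp' i0. \<forall>x\<in>T0 i. \<not> comparable x y0 \<or> succ x y0)"
    proof (intro allI impI ballI)
      fix i0 i y0 x assume h: "i0 < i \<and> i \<le> Suc L" "y0 \<in> SG d Sp' i0" "x \<in> T0 i"
      have "\<not> succ y0 x"
      proof
        assume "succ y0 x"
        then have "i0 \<in> R x" using h unfolding R_def by auto
        moreover have "R x = {i..L}" using Rint[of x] Stp[of x] h(3) unfolding T0_def by auto
        ultimately show False using h by auto
      qed
      then show "\<not> comparable x y0 \<or> succ x y0" unfolding comparable_def by blast
    qed
    show "\<forall>i0. \<forall>x0\<in>T0 i0. \<forall>i. i0 \<le> i \<and> i \<le> L \<longrightarrow> (\<exists>y\<in>SG d Sp' i. succ y x0)"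
    proof (intro allI impI ballI)
      fix i0 x0 i assume h: "x0 \<in> T0 i0" "i0 \<le> i \<and> i \<le> L"
      have "R x0 = {i0..L}" using Rint[of x0] Stp[of x0] h(1) unfolding T0_def by auto
      then have "i \<in> R x0" using h by auto
      then show "\<exists>y\<in>SG d Sp' i. succ y x0" unfolding R_def by blast
    qed
  qed
  have C: "x \<in> Stilde d Sp' S \<and> g x = i" if gp: "good_partition d Sp' S T" and x: "x \<in> T i" for T x i
  proof -
    note G = gp[unfolded good_partition_def L_def[symmetric]]
    note T1 = conjunct1[OF G] and T2 = conjunct1[OF conjunct2[OF G]]
      and T4 = conjunct1[OF conjunct2[OF conjunct2[OF conjunct2[OF G]]]]
      and T5 = conjunct2[OF conjunct2[OF conjunct2[OF conjunct2[OF G]]]]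
    have iL: "i \<le> Suc L"
    proof (rule ccontr)
      assume "\<not> i \<le> Suc L"
      then have "T i = {}" using T1 by simp
      then show False using x by simp
    qed
    have xS: "x \<in> Stilde d Sp' S" using T2 x iL by (metis UN_I atLeastAtMost_iff le0)
    have xl: "length x = n*d" "sum_list x = 0" using Stp[OF xS] by auto
    have "R x = {i..L}"
    proof
      show "{i..L} \<subseteq> R x" using T5 x unfolding R_def by auto
      show "R x \<subseteq> {i..L}"
      proof
        fix j assume j: "j \<in> R x"
        then obtain y where y: "j \<le> L" "y \<in> SG d Sp' j" "succ y x" unfolding R_def by blast
        have "i \<le> j"
        proof (rule ccontr)
          assume "\<not> i \<le> j"
          then have "j < i" by simp
          then have "\<forall>y0\<in>SG d Sp' j. \<forall>x\<in>T i. \<not> comparable x y0 \<or> succ x y0"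
            using spec[OF spec[OF T4, of j], of i] iL by blast
          then have "\<not> comparable x y \<or> succ x y" using y x by blast
          then have "succ x y" using y unfolding comparable_def by blast
          then show False using succ_antisym[of x y] y SGp[OF y(2)] xl by auto
        qed
        then show "j \<in> {i..L}" using y by auto
      qed
    qed
    then show ?thesis using xS gdet iL by blast
  qed
  have uniq: "T = T0" if gp: "good_partition d Sp' S T" for T
  proof
    fix i
    show "T i = T0 i"
    proof
      show "T i \<subseteq> T0 i" using C[OF gp] unfolding T0_def by blast
      show "T0 i \<subseteq> T i"
      proof
        fix x assume x: "x \<in> T0 i"
        note G = gp[unfolded good_partition_def L_def[symmetric]]
        have "x \<in> Stilde d Sp' S" using x unfolding T0_def by blast
        then obtain j where "x \<in> T j" using conjunct1[OF conjunct2[OF G]] by (metis UN_E)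
        then show "x \<in> T i" using C[OF gp] x unfolding T0_def by auto
      qed
    qed
  qed
  have iii: "\<not> comparable x x0 \<or> succ x x0"
    if gp: "good_partition d Sp' S T" and h: "i0 < i" "i \<le> Suc L" "x0 \<in> T i0" "x \<in> T i" for T i0 i x0 x
  proof -
    have c0: "x0 \<in> Stilde d Sp' S" "g x0 = i0" using C[OF gp h(3)] by auto
    have c1: "x \<in> Stilde d Sp' S" "g x = i" using C[OF gp h(4)] by auto
    have "\<not> succ x0 x"
    proof
      assume s: "succ x0 x"
      have "i0 \<in> R x0" using Rint[of x0] Stp[OF c0(1)] c0 h by auto
      then obtain y where y: "y \<in> SG d Sp' i0" "succ y x0" unfolding R_def by blast
      then have "succ y x" using succ_trans[of y x0 x] s SGp[OF y(1)] Stp[OF c0(1)] Stp[OF c1(1)] by auto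
      then have "i0 \<in> R x" using y h unfolding R_def by auto
      then show False using Rint[of x] Stp[OF c1(1)] c1 h by auto
    qed
    then show ?thesis unfolding comparable_def by blast
  qed
  show ?thesis
  proof (intro conjI)
    show "\<exists>!T. good_partition d Sp' S T" using T0good uniq by blast
    show "\<forall>T. good_partition d Sp' S T \<longrightarrow>
            (\<forall>i0 i. i0 < i \<and> i \<le> Suc (ellp Sp') \<longrightarrow>
               (\<forall>x0\<in>T i0. \<forall>x\<in>T i. \<not> comparable x x0 \<or> succ x x0))"
      using iii unfolding L_def by blast
  qed
qed

end
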